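(* Let $g_1,\dots,g_n$ be real-analytic functions of $(x^1,\dots,x^n)$ on a connected open set such that for all pairwise distinct $i,j,k$ $$\frac{\partial g_i}{\partial x^j}\frac{\partial g_k}{\partial x^i}+\frac{\partial g_k}{\partial x^j}\frac{\partial g_j}{\partial x^i}-\frac{\partial g_k}{\partial x^j}\frac{\partial g_k}{\partial x^i}=0.$$ Define a relation on $\{1,\dots,n\}$ by $i\preccurlyeq j$ iff $i=j$ or $g_j$ depends on $x^i$ (i.e. $\partial g_j/\partial x^i\not\equiv0$). Then $\preccurlyeq$ is transitive (if $i\preccurlyeq j$ and $j\preccurlyeq k$ then $i\preccurlyeq k$), and for every $k$ any two elements $i,j$ of $\operatorname{Less}_k=\{i: i\preccurlyeq k\}$ satisfy $i\preccurlyeq j$ or $j\preccurlyeq i$. *)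

theory Defs
  imports "HOL-Analysis.Analysis"
begin

text \<open>Real-analytic functions on a subset of R^n (index type 'n): near every point
  of U the function is the sum of an (unconditionally, i.e. absolutely) convergent
  multivariate power series centred at that point.\<close>
definition real_analytic_on :: "(real^'n::finite \<Rightarrow> real) \<Rightarrow> (real^'n) set \<Rightarrow> bool" where
  "real_analytic_on f U \<longleftrightarrow>
     (\<forall>a\<in>U. \<exists>r>0. \<exists>c :: ('n \<Rightarrow> nat) \<Rightarrow> real.
        \<forall>x\<in>ball a r.
          ((\<lambda>\<alpha>. c \<alpha> * (\<Prod>i\<in>UNIV. (x $ i - a $ i) ^ \<alpha> i)) has_sum f x) UNIV)"

definition partial :: "(real^'n::finite \<Rightarrow> real) \<Rightarrow> 'n \<Rightarrow> real^'n \<Rightarrow> real" where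
  "partial f j x = deriv (\<lambda>t. f (x + t *\<^sub>R axis j 1)) 0"

definition dep_rel :: "('n::finite \<Rightarrow> real^'n \<Rightarrow> real) \<Rightarrow> (real^'n) set \<Rightarrow> 'n \<Rightarrow> 'n \<Rightarrow> bool" where
  "dep_rel g U i j \<longleftrightarrow> i = j \<or> (\<exists>x\<in>U. partial (g j) i x \<noteq> 0)"

end

theory Submission imports Defs "HOL-Complex_Analysis.Cauchy_Integral_Formula"
begin

definition mon :: "real^'n::finite \<Rightarrow> ('n \<Rightarrow> nat) \<Rightarrow> real" where
  "mon u \<alpha> = (\<Prod>i\<in>UNIV. (u $ i) ^ \<alpha> i)"

definition bnm :: "('n::finite \<Rightarrow> nat) \<Rightarrow> ('n \<Rightarrow> nat) \<Rightarrow> real" where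
  "bnm \<alpha> \<beta> = (\<Prod>i\<in>UNIV. of_nat (\<alpha> i choose \<beta> i))"

definition mdiff :: "('n \<Rightarrow> nat) \<Rightarrow> ('n \<Rightarrow> nat) \<Rightarrow> ('n \<Rightarrow> nat)" where
  "mdiff \<alpha> \<beta> = (\<lambda>i. \<alpha> i - \<beta> i)"

lemma bin_has_sum:
  fixes p q :: "real^'n::finite"
  shows "((\<lambda>\<beta>. bnm \<alpha> \<beta> * mon p \<beta> * mon q (mdiff \<alpha> \<beta>)) has_sum mon (p+q) \<alpha>) UNIV"
proof (rule has_sum_finite_neutralI)
  let ?S = "PiE UNIV (\<lambda>i. {..\<alpha> i})"
  show "finite ?S" by (simp add: finite_PiE)
  show "?S \<subseteq> UNIV" by simp
  show "bnm \<alpha> \<beta> * mon p \<beta> * mon q (mdiff \<alpha> \<beta>) = 0" if "\<beta> \<in> UNIV - ?S" for \<beta>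
  proof -
    from that obtain i where "\<beta> i > \<alpha> i" by (auto simp: PiE_def Pi_def not_le)
    hence "of_nat (\<alpha> i choose \<beta> i) = (0::real)" by simp
    hence "bnm \<alpha> \<beta> = 0" unfolding bnm_def by (meson UNIV_I finite prod_zero)
    thus ?thesis by simp
  qed
  have "mon (p+q) \<alpha> = (\<Prod>i\<in>UNIV. \<Sum>k\<le>\<alpha> i. of_nat (\<alpha> i choose k) * p$i ^ k * q$i ^ (\<alpha> i - k))"
    unfolding mon_def by (simp add: binomial_ring)
  also have "\<dots> = (\<Sum>\<beta>\<in>?S. \<Prod>i\<in>UNIV. of_nat (\<alpha> i choose \<beta> i) * p$i ^ \<beta> i * q$i ^ (\<alpha> i - \<beta> i))"
    by (rule prod_sum_PiE) auto
  also have "\<dots> = (\<Sum>\<beta>\<in>?S. bnm \<alpha> \<beta> * mon p \<beta> * mon q (mdiff \<alpha> \<beta>))"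
    by (simp add: bnm_def mon_def mdiff_def prod.distrib)
  finally show "mon (p+q) \<alpha> = (\<Sum>\<beta>\<in>?S. bnm \<alpha> \<beta> * mon p \<beta> * mon q (mdiff \<alpha> \<beta>))" .
qed

lemma fubini_real:
  fixes F :: "'a \<Rightarrow> 'b \<Rightarrow> real"
  assumes abs: "\<And>a. ((\<lambda>b. \<bar>F a b\<bar>) has_sum A a) UNIV" and As: "A summable_on UNIV"
  shows "((\<lambda>b. \<Sum>\<^sub>\<infinity>a. F a b) has_sum (\<Sum>\<^sub>\<infinity>a. \<Sum>\<^sub>\<infinity>b. F a b)) UNIV"
    and "\<And>b. (\<lambda>a. F a b) summable_on UNIV"
    and "\<And>a. F a summable_on UNIV"
    and "(\<lambda>a. \<Sum>\<^sub>\<infinity>b. F a b) summable_on UNIV"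
proof -
  have "(\<lambda>(a,b). \<bar>F a b\<bar>) summable_on Sigma UNIV (\<lambda>_. UNIV)"
    by (rule summable_on_SigmaI[where g=A]) (use abs As in simp_all)
  hence G0: "(\<lambda>x. norm ((\<lambda>(a,b). F a b) x)) summable_on UNIV"
    by (simp add: case_prod_unfold)
  hence G: "(\<lambda>(a,b). F a b) summable_on UNIV"
    using summable_on_iff_abs_summable_on_real by blast
  have Gs: "(\<lambda>(b,a). F a b) summable_on UNIV"
    using G summable_on_swap[of "\<lambda>(a,b). F a b" UNIV UNIV] by simp
  show rows: "\<And>a. F a summable_on UNIV"
    using summable_on_SigmaD1[of "\<lambda>a b. F a b" UNIV "\<lambda>_. UNIV"] G by simp
  show cols: "\<And>b. (\<lambda>a. F a b) summable_on UNIV"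
    using summable_on_SigmaD1[of "\<lambda>b a. F a b" UNIV "\<lambda>_. UNIV"] Gs by simp
  define T where "T = (\<Sum>\<^sub>\<infinity>(a,b). F a b)"
  have hT: "((\<lambda>(a,b). F a b) has_sum T) (Sigma UNIV (\<lambda>_. UNIV))"
    using G T_def by (simp add: has_sum_infsum)
  have r: "((\<lambda>a. \<Sum>\<^sub>\<infinity>b. F a b) has_sum T) UNIV"
    by (rule has_sum_SigmaD[OF hT]) (use has_sum_infsum[OF rows] in simp)
  thus "(\<lambda>a. \<Sum>\<^sub>\<infinity>b. F a b) summable_on UNIV" by (auto simp: summable_on_def)
  have hT': "((\<lambda>(b,a). F a b) has_sum T) (Sigma UNIV (\<lambda>_. UNIV))"
    using hT has_sum_swap[where f="\<lambda>(a,b). F a b" and S=T and A=UNIV and B=UNIV] by simp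
  have c: "((\<lambda>b. \<Sum>\<^sub>\<infinity>a. F a b) has_sum T) UNIV"
    by (rule has_sum_SigmaD[OF hT']) (use has_sum_infsum[OF cols] in simp)
  from r have "T = (\<Sum>\<^sub>\<infinity>a. \<Sum>\<^sub>\<infinity>b. F a b)" by (simp add: infsumI)
  with c show "((\<lambda>b. \<Sum>\<^sub>\<infinity>a. F a b) has_sum (\<Sum>\<^sub>\<infinity>a. \<Sum>\<^sub>\<infinity>b. F a b)) UNIV" by simp
qed

definition pd :: "real^'n::finite \<Rightarrow> real \<Rightarrow> (real^'n) set" where
  "pd a r = {x. \<forall>i. \<bar>x$i - a$i\<bar> < r}"

definition deg :: "('n::finite \<Rightarrow> nat) \<Rightarrow> nat" where
  "deg \<alpha> = (\<Sum>i\<in>UNIV. \<alpha> i)"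

definition locPS :: "(real^'n::finite \<Rightarrow> real) \<Rightarrow> real^'n \<Rightarrow> real \<Rightarrow> (('n \<Rightarrow> nat) \<Rightarrow> real) \<Rightarrow> bool" where
  "locPS f a \<rho> c \<longleftrightarrow> 0 < \<rho> \<and> (\<lambda>\<alpha>. \<bar>c \<alpha>\<bar> * \<rho> ^ deg \<alpha>) summable_on UNIV \<and>
     (\<forall>x\<in>pd a \<rho>. ((\<lambda>\<alpha>. c \<alpha> * mon (x - a) \<alpha>) has_sum f x) UNIV)"

lemma mon_abs: "\<bar>mon u \<alpha>\<bar> = mon (\<chi> i. \<bar>u$i\<bar>) \<alpha>"
  by (simp add: mon_def abs_prod power_abs)

lemma mon_const: "mon (\<chi> i. r) \<alpha> = r ^ deg \<alpha>"
  by (simp add: mon_def deg_def power_sum)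

lemma mon_mono: "(\<And>i. 0 \<le> u$i \<and> u$i \<le> v$i) \<Longrightarrow> mon u \<alpha> \<le> mon v \<alpha>"
  unfolding mon_def by (intro prod_mono) (auto intro: power_mono)

lemma mon_nonneg: "(\<And>i. 0 \<le> u$i) \<Longrightarrow> 0 \<le> mon u \<alpha>"
  unfolding mon_def by (intro prod_nonneg) auto

lemma mon_abs_le: "(\<And>i. \<bar>u$i\<bar> \<le> r) \<Longrightarrow> \<bar>mon u \<alpha>\<bar> \<le> r ^ deg \<alpha>"
proof -
  assume "\<And>i. \<bar>u$i\<bar> \<le> r"
  hence "mon (\<chi> i. \<bar>u$i\<bar>) \<alpha> \<le> mon (\<chi> i. r) \<alpha>" by (intro mon_mono) auto
  thus ?thesis by (simp add: mon_abs mon_const)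
qed

lemma bnm_nonneg: "0 \<le> bnm \<alpha> \<beta>"
  unfolding bnm_def by (intro prod_nonneg) auto

lemma open_pd: "open (pd a r)"
proof -
  have "pd a r = (\<Inter>i\<in>UNIV. {x. \<bar>x$i - a$i\<bar> < r})" unfolding pd_def by auto
  moreover have "open {x::real^'a. \<bar>x$i - a$i\<bar> < r}" for i
    by (intro open_Collect_less continuous_intros)
  ultimately show ?thesis by auto
qed

lemma pd_mono: "r \<le> s \<Longrightarrow> x \<in> pd a r \<Longrightarrow> x \<in> pd a s"
  unfolding pd_def by (auto intro: less_le_trans)

lemma center_pd: "0 < r \<Longrightarrow> a \<in> pd a r"
  by (simp add: pd_def)

lemma ball_pd: "ball a r \<subseteq> pd a r"
proof
  fix x assume "x \<in> ball a r"
  hence "norm (x - a) < r" by (simp add: dist_norm norm_minus_commute)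
  thus "x \<in> pd a r" unfolding pd_def
    using component_le_norm_cart[of "x - a"] by (auto intro: le_less_trans)
qed

lemma pd_ball: assumes "0 < r" shows "pd (a::real^'n::finite) r \<subseteq> ball a (real CARD('n) * r)"
proof
  fix x :: "real^'n" assume "x \<in> pd a r"
  hence "\<And>i. \<bar>(x - a)$i\<bar> < r" by (simp add: pd_def)
  hence "(\<Sum>i\<in>UNIV. \<bar>(x - a)$i\<bar>) < (\<Sum>i\<in>(UNIV::'n set). r)"
    by (intro sum_strict_mono) auto
  hence "norm (x - a) < real CARD('n) * r"
    using norm_le_l1_cart[of "x - a"] by simp
  thus "x \<in> ball a (real CARD('n) * r)" by (simp add: dist_norm norm_minus_commute)
qed

lemma locPS_of_analytic:
  fixes f :: "real^'n::finite \<Rightarrow> real"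
  assumes "real_analytic_on f U" "open U" "a \<in> U"
  shows "\<exists>\<rho> c. locPS f a \<rho> c \<and> pd a \<rho> \<subseteq> U"
proof -
  obtain r c where r: "r > 0" and hs: "\<forall>x\<in>ball a r. ((\<lambda>\<alpha>. c \<alpha> * (\<Prod>i\<in>UNIV. (x $ i - a $ i) ^ \<alpha> i)) has_sum f x) UNIV"
    using assms(1,3) unfolding real_analytic_on_def by blast
  have hs': "((\<lambda>\<alpha>. c \<alpha> * mon (x - a) \<alpha>) has_sum f x) UNIV" if "x \<in> ball a r" for x
    using hs that by (simp add: mon_def)
  obtain e where e: "e > 0" "ball a e \<subseteq> U" using assms(2,3) open_contains_ball by blast
  define R where "R = min r e"
  have R: "R > 0" "R \<le> r" "R \<le> e" using r e by (auto simp: R_def)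
  define \<rho> where "\<rho> = R / (2 * real CARD('n))"
  have \<rho>: "\<rho> > 0" using R by (simp add: \<rho>_def)
  have C: "real CARD('n) * \<rho> = R / 2" by (simp add: \<rho>_def)
  have sub: "pd a \<rho> \<subseteq> ball a (R/2)" using pd_ball[OF \<rho>, of a] C by simp
  have sub2: "ball a (R/2) \<subseteq> ball a r" "ball a (R/2) \<subseteq> U" using R e by auto
  have "norm ((\<chi> i. \<rho>) :: real^'n) \<le> real CARD('n) * \<rho>"
    using norm_le_l1_cart[of "(\<chi> i. \<rho>) :: real^'n"] \<rho> by simp
  hence pin: "a + (\<chi> i. \<rho>) \<in> ball a r" using C R by (simp add: dist_norm)
  have "((\<lambda>\<alpha>. c \<alpha> * mon (\<chi> i. \<rho>) \<alpha>) has_sum f (a + (\<chi> i. \<rho>))) UNIV"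
    using hs'[OF pin] by simp
  hence "(\<lambda>\<alpha>. c \<alpha> * mon (\<chi> i. \<rho>) \<alpha>) summable_on UNIV"
    by (rule has_sum_imp_summable)
  hence "(\<lambda>\<alpha>. norm (c \<alpha> * mon (\<chi> i. \<rho>) \<alpha>)) summable_on UNIV"
    using summable_on_iff_abs_summable_on_real[of "\<lambda>\<alpha>. c \<alpha> * mon (\<chi> i. \<rho>) \<alpha>" UNIV] by simp
  moreover have "norm (c \<alpha> * mon (\<chi> i. \<rho>) \<alpha>) = \<bar>c \<alpha>\<bar> * \<rho> ^ deg \<alpha>" for \<alpha>
    using \<rho> by (simp add: mon_const abs_mult)
  ultimately have cs: "(\<lambda>\<alpha>. \<bar>c \<alpha>\<bar> * \<rho> ^ deg \<alpha>) summable_on UNIV" by simp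
  have "locPS f a \<rho> c" unfolding locPS_def using \<rho> cs hs' sub sub2 by blast
  moreover have "pd a \<rho> \<subseteq> U" using sub sub2 by blast
  ultimately show ?thesis by blast
qed

lemma recenter:
  fixes c :: "('n::finite \<Rightarrow> nat) \<Rightarrow> real"
  assumes L: "locPS f a \<rho> c" and \<tau>: "0 < \<tau>" and b: "\<And>i. \<bar>b$i - a$i\<bar> + \<tau> \<le> \<rho>"
  shows "locPS f b \<tau> (\<lambda>\<beta>. \<Sum>\<^sub>\<infinity>\<alpha>. c \<alpha> * bnm \<alpha> \<beta> * mon (b - a) (mdiff \<alpha> \<beta>))"
    and "\<And>\<beta>. (\<lambda>\<alpha>. c \<alpha> * bnm \<alpha> \<beta> * mon (b - a) (mdiff \<alpha> \<beta>)) summable_on UNIV"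
proof -
  define d where "d = (\<lambda>\<beta>. \<Sum>\<^sub>\<infinity>\<alpha>. c \<alpha> * bnm \<alpha> \<beta> * mon (b - a) (mdiff \<alpha> \<beta>))"
  define q where "q = b - a"
  define w :: "real^'n" where "w = (\<chi> i. \<bar>q$i\<bar>)"
  define F where "F = (\<lambda>u \<alpha> \<beta>. c \<alpha> * bnm \<alpha> \<beta> * mon q (mdiff \<alpha> \<beta>) * mon u \<beta>)"
  from L have \<rho>: "0 < \<rho>" and cs: "(\<lambda>\<alpha>. \<bar>c \<alpha>\<bar> * \<rho> ^ deg \<alpha>) summable_on UNIV"
    and hs: "\<And>x. x \<in> pd a \<rho> \<Longrightarrow> ((\<lambda>\<alpha>. c \<alpha> * mon (x - a) \<alpha>) has_sum f x) UNIV"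
    unfolding locPS_def by auto
  have habs: "((\<lambda>\<beta>. \<bar>F u \<alpha> \<beta>\<bar>) has_sum \<bar>c \<alpha>\<bar> * mon ((\<chi> i. \<bar>u$i\<bar>) + w) \<alpha>) UNIV" for u \<alpha>
  proof -
    have "((\<lambda>\<beta>. \<bar>c \<alpha>\<bar> * (bnm \<alpha> \<beta> * mon (\<chi> i. \<bar>u$i\<bar>) \<beta> * mon w (mdiff \<alpha> \<beta>))) has_sum
            \<bar>c \<alpha>\<bar> * mon ((\<chi> i. \<bar>u$i\<bar>) + w) \<alpha>) UNIV"
      by (rule has_sum_cmult_right) (rule bin_has_sum)
    moreover have "\<bar>F u \<alpha> \<beta>\<bar> = \<bar>c \<alpha>\<bar> * (bnm \<alpha> \<beta> * mon (\<chi> i. \<bar>u$i\<bar>) \<beta> * mon w (mdiff \<alpha> \<beta>))" for \<beta>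
      using bnm_nonneg[of \<alpha> \<beta>] unfolding F_def w_def
      by (simp add: abs_mult mon_abs)
    ultimately show ?thesis by simp
  qed
  have Asum: "(\<lambda>\<alpha>. \<bar>c \<alpha>\<bar> * mon ((\<chi> i. \<bar>u$i\<bar>) + w) \<alpha>) summable_on UNIV"
    if u: "\<And>i. \<bar>u$i\<bar> \<le> \<tau>" for u
  proof (rule summable_on_comparison_test[OF cs])
    fix \<alpha>
    have "mon ((\<chi> i. \<bar>u$i\<bar>) + w) \<alpha> \<le> mon (\<chi> i. \<rho>) \<alpha>"
    proof (rule mon_mono)
      fix i show "0 \<le> ((\<chi> i. \<bar>u$i\<bar>) + w)$i \<and> ((\<chi> i. \<bar>u$i\<bar>) + w)$i \<le> (\<chi> i. \<rho>)$i"
        using u[of i] b[of i] by (simp add: w_def q_def)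
    qed
    thus "\<bar>c \<alpha>\<bar> * mon ((\<chi> i. \<bar>u$i\<bar>) + w) \<alpha> \<le> \<bar>c \<alpha>\<bar> * \<rho> ^ deg \<alpha>"
      by (simp add: mon_const mult_left_mono)
    show "0 \<le> \<bar>c \<alpha>\<bar> * mon ((\<chi> i. \<bar>u$i\<bar>) + w) \<alpha>"
      by (intro mult_nonneg_nonneg mon_nonneg) (auto simp: w_def)
  qed
  have hrow: "(F u \<alpha> has_sum c \<alpha> * mon (u + q) \<alpha>) UNIV" for u \<alpha>
  proof -
    have "((\<lambda>\<beta>. c \<alpha> * (bnm \<alpha> \<beta> * mon u \<beta> * mon q (mdiff \<alpha> \<beta>))) has_sum c \<alpha> * mon (u + q) \<alpha>) UNIV"
      by (rule has_sum_cmult_right) (rule bin_has_sum)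
    thus ?thesis unfolding F_def by (simp add: ac_simps)
  qed
  have hcol: "(\<Sum>\<^sub>\<infinity>\<alpha>. F u \<alpha> \<beta>) = d \<beta> * mon u \<beta>" for u \<beta>
    unfolding F_def d_def q_def by (rule infsum_cmult_left')
  have main: "((\<lambda>\<beta>. d \<beta> * mon u \<beta>) has_sum (\<Sum>\<^sub>\<infinity>\<alpha>. c \<alpha> * mon (u + q) \<alpha>)) UNIV"
    and colsum: "\<And>\<beta>. (\<lambda>\<alpha>. F u \<alpha> \<beta>) summable_on UNIV"
    if u: "\<And>i. \<bar>u$i\<bar> \<le> \<tau>" for u
  proof -
    note fb = fubini_real[of "F u", OF habs Asum[OF u]]
    show "\<And>\<beta>. (\<lambda>\<alpha>. F u \<alpha> \<beta>) summable_on UNIV" by (rule fb(2))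
    have "(\<lambda>\<alpha>. \<Sum>\<^sub>\<infinity>\<beta>. F u \<alpha> \<beta>) = (\<lambda>\<alpha>. c \<alpha> * mon (u + q) \<alpha>)"
      using hrow by (intro ext infsumI)
    thus "((\<lambda>\<beta>. d \<beta> * mon u \<beta>) has_sum (\<Sum>\<^sub>\<infinity>\<alpha>. c \<alpha> * mon (u + q) \<alpha>)) UNIV"
      using fb(1) hcol by simp
  qed
  define t :: "real^'n" where "t = (\<chi> i. \<tau>)"
  have t: "\<And>i. \<bar>t$i\<bar> \<le> \<tau>" using \<tau> by (simp add: t_def)
  have tpos: "mon t \<beta> > 0" for \<beta> using \<tau> by (simp add: t_def mon_const)
  show summ: "(\<lambda>\<alpha>. c \<alpha> * bnm \<alpha> \<beta> * mon (b - a) (mdiff \<alpha> \<beta>)) summable_on UNIV" for \<beta>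
  proof -
    have nz: "mon t \<beta> \<noteq> 0" using tpos[of \<beta>] by simp
    have "(\<lambda>\<alpha>. (c \<alpha> * bnm \<alpha> \<beta> * mon q (mdiff \<alpha> \<beta>)) * mon t \<beta>) summable_on UNIV"
      using colsum[OF t] unfolding F_def .
    hence "(\<lambda>\<alpha>. c \<alpha> * bnm \<alpha> \<beta> * mon q (mdiff \<alpha> \<beta>)) summable_on UNIV"
      by (rule iffD1[OF summable_on_cmult_left'[OF nz]])
    thus ?thesis unfolding q_def .
  qed
  have dsum: "(\<lambda>\<beta>. \<bar>d \<beta>\<bar> * \<tau> ^ deg \<beta>) summable_on UNIV"
  proof -
    have habs': "((\<lambda>\<beta>. \<bar>\<bar>F t \<alpha> \<beta>\<bar>\<bar>) has_sum \<bar>c \<alpha>\<bar> * mon ((\<chi> i. \<bar>t$i\<bar>) + w) \<alpha>) UNIV" for \<alpha>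
      using habs[of t \<alpha>] by simp
    note fb = fubini_real[of "\<lambda>\<alpha> \<beta>. \<bar>F t \<alpha> \<beta>\<bar>", OF habs' Asum[OF t]]
    show ?thesis
    proof (rule summable_on_comparison_test[OF fb(1)[THEN has_sum_imp_summable]])
      fix \<beta>
      have "\<bar>d \<beta> * mon t \<beta>\<bar> \<le> (\<Sum>\<^sub>\<infinity>\<alpha>. \<bar>F t \<alpha> \<beta>\<bar>)"
        using norm_infsum_le[OF has_sum_infsum[OF colsum[OF t]] has_sum_infsum[OF fb(2)], of \<beta>]
        by (simp add: hcol)
      thus "\<bar>d \<beta>\<bar> * \<tau> ^ deg \<beta> \<le> (\<Sum>\<^sub>\<infinity>\<alpha>. \<bar>F t \<alpha> \<beta>\<bar>)"
        using \<tau> by (simp add: t_def mon_const abs_mult)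
    qed (use \<tau> in simp)
  qed
  show "locPS f b \<tau> (\<lambda>\<beta>. \<Sum>\<^sub>\<infinity>\<alpha>. c \<alpha> * bnm \<alpha> \<beta> * mon (b - a) (mdiff \<alpha> \<beta>))"
    unfolding locPS_def d_def[symmetric]
  proof (intro conjI ballI \<tau> dsum)
    fix x assume x: "x \<in> pd b \<tau>"
    define u where "u = x - b"
    have u: "\<And>i. \<bar>u$i\<bar> \<le> \<tau>" using x by (auto simp: pd_def u_def less_imp_le)
    have "x \<in> pd a \<rho>" unfolding pd_def mem_Collect_eq
    proof
      fix i
      have "\<bar>x$i - a$i\<bar> \<le> \<bar>x$i - b$i\<bar> + \<bar>b$i - a$i\<bar>" by linarith
      also have "\<dots> < \<tau> + \<bar>b$i - a$i\<bar>" using x by (simp add: pd_def)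
      also have "\<dots> \<le> \<rho>" using b[of i] by linarith
      finally show "\<bar>x$i - a$i\<bar> < \<rho>" .
    qed
    hence e1: "(\<Sum>\<^sub>\<infinity>\<alpha>. c \<alpha> * mon (x - a) \<alpha>) = f x"
      by (rule infsumI[OF hs])
    have xa: "u + q = x - a" by (simp add: u_def q_def)
    show "((\<lambda>\<beta>. d \<beta> * mon (x - b) \<beta>) has_sum f x) UNIV"
    proof -
      have "((\<lambda>\<beta>. d \<beta> * mon u \<beta>) has_sum f x) UNIV" using main[OF u] unfolding xa e1 .
      thus ?thesis unfolding u_def .
    qed
  qed
qed


definition hj :: "'n \<Rightarrow> nat \<Rightarrow> ('n \<Rightarrow> nat)" where
  "hj j m = (\<lambda>i. if i = j then m else 0)"

lemma mon_axis:
  fixes j :: "'n::finite"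
  shows "mon (t *\<^sub>R axis j 1) \<alpha> = (if \<forall>i. i \<noteq> j \<longrightarrow> \<alpha> i = 0 then t ^ \<alpha> j else 0)"
proof -
  have "mon (t *\<^sub>R axis j 1) \<alpha> = (\<Prod>i\<in>UNIV. (if i = j then t else 0) ^ \<alpha> i)"
    unfolding mon_def by (intro prod.cong) (auto simp: axis_def)
  also have "\<dots> = t ^ \<alpha> j * (\<Prod>i\<in>UNIV-{j}. (if i = j then t else 0) ^ \<alpha> i)"
    by (subst prod.remove[of UNIV j]) auto
  also have "(\<Prod>i\<in>UNIV-{j}. (if i = j then t else 0) ^ \<alpha> i) = (\<Prod>i\<in>UNIV-{j}. (0::real) ^ \<alpha> i)"
    by (intro prod.cong) auto
  also have "\<dots> = (if \<forall>i. i \<noteq> j \<longrightarrow> \<alpha> i = 0 then 1 else 0)"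
  proof (cases "\<forall>i. i \<noteq> j \<longrightarrow> \<alpha> i = 0")
    case True thus ?thesis by (intro trans[OF prod.neutral]) auto
  next
    case False
    then obtain i where "i \<noteq> j" "\<alpha> i \<noteq> 0" by blast
    hence "(\<Prod>i\<in>UNIV-{j}. (0::real) ^ \<alpha> i) = 0" by (intro prod_zero) auto
    with False show ?thesis by simp
  qed
  finally show ?thesis by (cases "\<forall>i. i \<noteq> j \<longrightarrow> \<alpha> i = 0") auto
qed

lemma line_has_sum:
  fixes j :: "'n::finite"
  assumes L: "locPS f a \<rho> c" and t: "\<bar>t\<bar> < \<rho>"
  shows "(\<lambda>m. c (hj j m) * t ^ m) sums f (a + t *\<^sub>R axis j 1)"
proof -
  from L have hs: "\<And>x. x \<in> pd a \<rho> \<Longrightarrow> ((\<lambda>\<alpha>. c \<alpha> * mon (x - a) \<alpha>) has_sum f x) UNIV"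
    unfolding locPS_def by auto
  have "a + t *\<^sub>R axis j 1 \<in> pd a \<rho>" using t L by (auto simp: pd_def axis_def locPS_def)
  from hs[OF this] have h1: "((\<lambda>\<alpha>. c \<alpha> * mon (t *\<^sub>R axis j 1) \<alpha>) has_sum f (a + t *\<^sub>R axis j 1)) UNIV"
    by simp
  have inj: "inj (hj j)" by (intro injI) (metis hj_def)
  have "((\<lambda>\<alpha>. c \<alpha> * mon (t *\<^sub>R axis j 1) \<alpha>) has_sum f (a + t *\<^sub>R axis j 1)) (range (hj j))"
  proof (subst has_sum_cong_neutral[where T=UNIV and g="\<lambda>\<alpha>. c \<alpha> * mon (t *\<^sub>R axis j 1) \<alpha>"])
    show "c \<alpha> * mon (t *\<^sub>R axis j 1) \<alpha> = 0" if "\<alpha> \<in> UNIV - range (hj j)" for \<alpha>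
    proof -
      have "\<not> (\<forall>i. i \<noteq> j \<longrightarrow> \<alpha> i = 0)"
      proof
        assume "\<forall>i. i \<noteq> j \<longrightarrow> \<alpha> i = 0"
        hence "\<alpha> = hj j (\<alpha> j)" by (auto simp: hj_def)
        with that show False by auto
      qed
      thus ?thesis unfolding mon_axis by auto
    qed
  qed (use h1 in auto)
  hence "((\<lambda>\<alpha>. c \<alpha> * mon (t *\<^sub>R axis j 1) \<alpha>) \<circ> hj j has_sum f (a + t *\<^sub>R axis j 1)) UNIV"
    using has_sum_reindex[OF inj_on_subset[OF inj subset_UNIV]] by blast
  moreover have "((\<lambda>\<alpha>. c \<alpha> * mon (t *\<^sub>R axis j 1) \<alpha>) \<circ> hj j) = (\<lambda>m. c (hj j m) * t ^ m)"
    by (auto simp: mon_axis hj_def fun_eq_iff)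
  ultimately show ?thesis by (intro has_sum_imp_sums) simp
qed

lemma partial_center:
  fixes j :: "'n::finite"
  assumes L: "locPS f a \<rho> c"
  shows "partial f j a = c (hj j 1)" and "f a = c (hj j 0)"
proof -
  have \<rho>: "0 < \<rho>" using L by (simp add: locPS_def)
  define cc where "cc = (\<lambda>m. c (hj j m))"
  define \<phi> where "\<phi> = (\<lambda>t. f (a + t *\<^sub>R axis j 1))"
  have sm: "\<And>z. norm z < \<rho> \<Longrightarrow> (\<lambda>n. cc n * z ^ n) sums \<phi> z"
    unfolding cc_def \<phi>_def using line_has_sum[OF L] by simp
  have "cc 0 = \<phi> 0" using sm[of 0] \<rho> by simp
  thus "f a = c (hj j 0)" by (simp add: cc_def \<phi>_def)
  have d: "((\<lambda>z. \<Sum>n. cc n * z^n) has_field_derivative (\<Sum>n. diffs cc n * 0^n)) (at 0)"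
    by (rule termdiffs_strong'[of \<rho>]) (use sm \<rho> in \<open>auto intro: sums_summable\<close>)
  have "(\<Sum>n. diffs cc n * 0^n) = cc 1" by (simp add: diffs_def)
  moreover have "eventually (\<lambda>z. (\<Sum>n. cc n * z^n) = \<phi> z) (nhds 0)"
  proof -
    have "eventually (\<lambda>z. z \<in> ball 0 \<rho>) (nhds (0::real))"
      using \<rho> by (intro eventually_nhds_in_open) auto
    thus ?thesis by eventually_elim (use sm in \<open>auto simp: sums_iff\<close>)
  qed
  ultimately have "(\<phi> has_field_derivative cc 1) (at 0)"
    using d by (subst (asm) DERIV_cong_ev[OF refl _ refl]) auto
  hence "deriv \<phi> 0 = cc 1" by (rule DERIV_imp_deriv)
  thus "partial f j a = c (hj j 1)" by (simp add: partial_def \<phi>_def cc_def)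
qed


lemma partial_near:
  fixes j :: "'n::finite"
  assumes L: "locPS f a \<rho> c" and y: "y \<in> pd a \<rho>"
  shows "((\<lambda>\<alpha>. c \<alpha> * bnm \<alpha> (hj j 1) * mon (y - a) (mdiff \<alpha> (hj j 1))) has_sum partial f j y) UNIV"
proof -
  define M where "M = Max (range (\<lambda>i. \<bar>y$i - a$i\<bar>))"
  have M: "\<bar>y$i - a$i\<bar> \<le> M" for i unfolding M_def by (intro Max_ge) auto
  have "M \<in> range (\<lambda>i. \<bar>y$i - a$i\<bar>)" unfolding M_def by (intro Max_in) auto
  hence "M < \<rho>" using y by (auto simp: pd_def)
  define \<tau> where "\<tau> = \<rho> - M"
  have \<tau>: "0 < \<tau>" "\<And>i. \<bar>y$i - a$i\<bar> + \<tau> \<le> \<rho>" using M \<open>M < \<rho>\<close> by (auto simp: \<tau>_def)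
  note R = recenter[OF L \<tau>]
  have "partial f j y = (\<Sum>\<^sub>\<infinity>\<alpha>. c \<alpha> * bnm \<alpha> (hj j 1) * mon (y - a) (mdiff \<alpha> (hj j 1)))"
    using partial_center(1)[OF R(1), of j] by simp
  thus ?thesis using has_sum_infsum[OF R(2)] by simp
qed

definition sh :: "'n \<Rightarrow> ('n \<Rightarrow> nat) \<Rightarrow> ('n \<Rightarrow> nat)" where
  "sh j \<gamma> = (\<lambda>i. \<gamma> i + hj j 1 i)"

lemma bnm_hj: "bnm \<alpha> (hj j 1) = of_nat (\<alpha> j)"
proof -
  have "bnm \<alpha> (hj j 1) = (\<Prod>i\<in>UNIV. if i = j then of_nat (\<alpha> j) else 1)"
    unfolding bnm_def by (intro prod.cong) (auto simp: hj_def)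
  thus ?thesis by simp
qed

lemma deg_sh: "deg (sh j \<gamma>) = Suc (deg \<gamma>)"
  unfolding deg_def sh_def by (simp add: sum.distrib hj_def)

lemma mdiff_sh: "mdiff (sh j \<gamma>) (hj j 1) = \<gamma>"
  by (simp add: mdiff_def sh_def)

lemma inj_sh: "inj (sh j)"
  by (intro injI) (metis mdiff_sh)

lemma sh_j[simp]: "sh j \<gamma> j = Suc (\<gamma> j)"
  by (simp add: sh_def hj_def)

lemma le_deg: "\<gamma> j \<le> deg \<gamma>"
  unfolding deg_def by (rule member_le_sum) auto

lemma Lpartial:
  fixes j :: "'n::finite"
  assumes L: "locPS f a \<rho> c"
  shows "locPS (partial f j) a (\<rho>/2) (\<lambda>\<gamma>. of_nat (Suc (\<gamma> j)) * c (sh j \<gamma>))"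
proof -
  from L have \<rho>: "0 < \<rho>" and cs: "(\<lambda>\<alpha>. \<bar>c \<alpha>\<bar> * \<rho> ^ deg \<alpha>) summable_on UNIV"
    unfolding locPS_def by auto
  have "(\<lambda>\<alpha>. \<bar>c \<alpha>\<bar> * \<rho> ^ deg \<alpha>) summable_on range (sh j)"
    by (rule summable_on_subset_banach[OF cs]) auto
  hence "((\<lambda>\<alpha>. \<bar>c \<alpha>\<bar> * \<rho> ^ deg \<alpha>) \<circ> sh j) summable_on UNIV"
    by (rule iffD1[OF summable_on_reindex[OF inj_on_subset[OF inj_sh subset_UNIV]]])
  hence "(\<lambda>\<gamma>. (\<bar>c (sh j \<gamma>)\<bar> * \<rho> ^ deg (sh j \<gamma>)) * (1/\<rho>)) summable_on UNIV"
    unfolding o_def by (rule summable_on_cmult_left)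
  moreover have "(\<lambda>\<gamma>. (\<bar>c (sh j \<gamma>)\<bar> * \<rho> ^ deg (sh j \<gamma>)) * (1/\<rho>)) = (\<lambda>\<gamma>. \<bar>c (sh j \<gamma>)\<bar> * \<rho> ^ deg \<gamma>)"
    by (rule ext) (use \<rho> in \<open>simp add: deg_sh\<close>)
  ultimately have cs': "(\<lambda>\<gamma>. \<bar>c (sh j \<gamma>)\<bar> * \<rho> ^ deg \<gamma>) summable_on UNIV" by simp
  have sum2: "(\<lambda>\<gamma>. \<bar>of_nat (Suc (\<gamma> j)) * c (sh j \<gamma>)\<bar> * (\<rho>/2) ^ deg \<gamma>) summable_on UNIV"
  proof (rule summable_on_comparison_test[OF cs'])
    fix \<gamma>
    have "real (Suc (\<gamma> j)) \<le> 2 ^ (\<gamma> j)"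
      using less_exp[of "\<gamma> j"] by (metis Suc_leI of_nat_le_iff of_nat_numeral of_nat_power)
    also have "\<dots> \<le> 2 ^ deg \<gamma>" by (intro power_increasing le_deg) auto
    finally have "real (Suc (\<gamma> j)) * (\<rho>/2) ^ deg \<gamma> \<le> 2 ^ deg \<gamma> * (\<rho>/2) ^ deg \<gamma>"
      using \<rho> by (intro mult_right_mono) auto
    also have "\<dots> = \<rho> ^ deg \<gamma>" by (simp add: power_mult_distrib[symmetric])
    finally have "\<bar>c (sh j \<gamma>)\<bar> * (real (Suc (\<gamma> j)) * (\<rho>/2) ^ deg \<gamma>) \<le> \<bar>c (sh j \<gamma>)\<bar> * \<rho> ^ deg \<gamma>"
      by (intro mult_left_mono) auto
    thus "\<bar>of_nat (Suc (\<gamma> j)) * c (sh j \<gamma>)\<bar> * (\<rho>/2) ^ deg \<gamma> \<le> \<bar>c (sh j \<gamma>)\<bar> * \<rho> ^ deg \<gamma>"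
      by (simp add: abs_mult ac_simps)
  qed (use \<rho> in simp)
  show ?thesis unfolding locPS_def
  proof (intro conjI ballI sum2)
    show "0 < \<rho>/2" using \<rho> by simp
    fix y assume y: "y \<in> pd a (\<rho>/2)"
    have y': "y \<in> pd a \<rho>" unfolding pd_def mem_Collect_eq
    proof
      fix i have "\<bar>y $ i - a $ i\<bar> < \<rho>/2" using y by (simp add: pd_def)
      thus "\<bar>y $ i - a $ i\<bar> < \<rho>" using \<rho> by linarith
    qed
    define G where "G = (\<lambda>\<alpha>. c \<alpha> * bnm \<alpha> (hj j 1) * mon (y - a) (mdiff \<alpha> (hj j 1)))"
    have h1: "(G has_sum partial f j y) UNIV" unfolding G_def by (rule partial_near[OF L y'])
    have "(G has_sum partial f j y) (range (sh j))"
    proof (subst has_sum_cong_neutral[where T=UNIV and g=G])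
      show "G \<alpha> = 0" if "\<alpha> \<in> UNIV - range (sh j)" for \<alpha>
      proof -
        have "\<alpha> j = 0"
        proof (rule ccontr)
          assume "\<alpha> j \<noteq> 0"
          hence "\<alpha> = sh j (mdiff \<alpha> (hj j 1))" by (auto simp: sh_def mdiff_def hj_def fun_eq_iff)
          with that show False by auto
        qed
        thus ?thesis unfolding G_def bnm_hj by simp
      qed
    qed (use h1 in auto)
    hence "((G \<circ> sh j) has_sum partial f j y) UNIV"
      by (rule iffD1[OF has_sum_reindex[OF inj_on_subset[OF inj_sh subset_UNIV]]])
    moreover have "G \<circ> sh j = (\<lambda>\<gamma>. of_nat (Suc (\<gamma> j)) * c (sh j \<gamma>) * mon (y - a) \<gamma>)"
      by (rule ext) (unfold G_def o_def bnm_hj mdiff_sh sh_j, simp)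
    ultimately show "((\<lambda>\<gamma>. of_nat (Suc (\<gamma> j)) * c (sh j \<gamma>) * mon (y - a) \<gamma>) has_sum partial f j y) UNIV"
      by simp
  qed
qed


lemma deg_zero: "deg \<alpha> = 0 \<Longrightarrow> \<alpha> = (\<lambda>_. 0)"
  unfolding deg_def by (auto simp: fun_eq_iff)

lemma pow_le_scaled:
  fixes \<delta> \<rho> :: real
  assumes "0 \<le> \<delta>" "\<delta> \<le> \<rho>" "0 < \<rho>" "d \<noteq> 0"
  shows "\<delta> ^ d \<le> (\<delta> / \<rho>) * \<rho> ^ d"
proof -
  obtain m where m: "d = Suc m" using assms(4) not0_implies_Suc by blast
  have "\<delta> ^ m \<le> \<rho> ^ m" using assms by (intro power_mono) auto
  hence "\<delta> * \<delta> ^ m \<le> \<delta> * \<rho> ^ m" using assms by (intro mult_left_mono) auto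
  also have "\<delta> * \<rho> ^ m = (\<delta> / \<rho>) * \<rho> ^ Suc m" using assms by simp
  finally show ?thesis by (simp add: m)
qed

lemma cont_center:
  assumes L: "locPS f a \<rho> c" and e: "e > 0"
  shows "\<exists>\<delta>>0. \<forall>x\<in>ball a \<delta>. \<bar>f x - f a\<bar> < e"
proof -
  from L have \<rho>: "0 < \<rho>" and cs: "(\<lambda>\<alpha>. \<bar>c \<alpha>\<bar> * \<rho> ^ deg \<alpha>) summable_on UNIV"
    and hs: "\<And>x. x \<in> pd a \<rho> \<Longrightarrow> ((\<lambda>\<alpha>. c \<alpha> * mon (x - a) \<alpha>) has_sum f x) UNIV"
    unfolding locPS_def by auto
  define z :: "'a \<Rightarrow> nat" where "z = (\<lambda>_. 0)"
  obtain j :: 'a where True by blast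
  have fa: "f a = c z" using partial_center(2)[OF L, of j] by (simp add: z_def hj_def)
  define K where "K = (\<Sum>\<^sub>\<infinity>\<alpha>. \<bar>c \<alpha>\<bar> * \<rho> ^ deg \<alpha>)"
  have K: "K \<ge> 0" unfolding K_def using \<rho> by (intro infsum_nonneg) auto
  define \<delta> where "\<delta> = min (\<rho>/2) (e * \<rho> / (2 * (K + 1)))"
  have pos: "0 < e * \<rho> / (2 * (K + 1))" using \<rho> e K by (intro divide_pos_pos mult_pos_pos) auto
  have d1: "0 < \<delta>" unfolding \<delta>_def using \<rho> pos by simp
  have d2: "\<delta> \<le> \<rho>/2" unfolding \<delta>_def by (rule min.cobounded1)
  have d3: "\<delta> \<le> e * \<rho> / (2 * (K + 1))" unfolding \<delta>_def by (rule min.cobounded2)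
  note \<delta> = d1 d2 d3
  have "\<bar>f x - f a\<bar> < e" if x: "x \<in> ball a \<delta>" for x
  proof -
    have xp: "x \<in> pd a \<delta>" using ball_pd x by blast
    have xp': "x \<in> pd a \<rho>" by (rule pd_mono[OF _ xp]) (use \<delta> \<rho> in linarith)
    define u where "u = x - a"
    have u: "\<bar>u$i\<bar> \<le> \<delta>" for i using xp by (auto simp: pd_def u_def less_imp_le)
    have h1: "((\<lambda>\<alpha>. c \<alpha> * mon u \<alpha>) has_sum f x) UNIV" using hs[OF xp'] by (simp add: u_def)
    have h2: "((\<lambda>\<alpha>. if \<alpha> = z then c z else 0) has_sum f a) UNIV"
      by (rule has_sum_finite_neutralI[where B="{z}"]) (auto simp: fa)
    have h3: "((\<lambda>\<alpha>. c \<alpha> * mon u \<alpha> + - (if \<alpha> = z then c z else 0)) has_sum f x + - f a) UNIV"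
      by (intro has_sum_add h1 has_sum_uminusI h2)
    have h4: "((\<lambda>\<alpha>. \<bar>c \<alpha>\<bar> * \<rho> ^ deg \<alpha> * (\<delta> / \<rho>)) has_sum K * (\<delta> / \<rho>)) UNIV"
      unfolding K_def by (intro has_sum_cmult_left has_sum_infsum cs)
    have "norm (f x + - f a) \<le> K * (\<delta> / \<rho>)"
    proof (rule norm_infsum_le[OF h3 h4])
      fix \<alpha> :: "'a \<Rightarrow> nat"
      show "norm (c \<alpha> * mon u \<alpha> + - (if \<alpha> = z then c z else 0)) \<le> \<bar>c \<alpha>\<bar> * \<rho> ^ deg \<alpha> * (\<delta> / \<rho>)"
      proof (cases "\<alpha> = z")
        case True
        hence "mon u \<alpha> = 1" by (simp add: mon_def z_def)
        thus ?thesis using True \<rho> \<delta> by simp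
      next
        case False
        hence d: "deg \<alpha> \<noteq> 0" using deg_zero z_def by blast
        have "\<bar>mon u \<alpha>\<bar> \<le> \<delta> ^ deg \<alpha>" by (rule mon_abs_le[OF u])
        also have "\<dots> \<le> (\<delta> / \<rho>) * \<rho> ^ deg \<alpha>" using \<delta> \<rho> d by (intro pow_le_scaled) auto
        finally have "\<bar>c \<alpha>\<bar> * \<bar>mon u \<alpha>\<bar> \<le> \<bar>c \<alpha>\<bar> * ((\<delta> / \<rho>) * \<rho> ^ deg \<alpha>)"
          by (intro mult_left_mono) auto
        thus ?thesis using False by (simp add: abs_mult ac_simps)
      qed
    qed
    hence "\<bar>f x - f a\<bar> \<le> K * (\<delta> / \<rho>)" by simp
    also have "K * (\<delta> / \<rho>) \<le> K * (e / (2 * (K + 1)))"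
      using \<delta> \<rho> K by (intro mult_left_mono) (auto simp: field_simps)
    also have "\<dots> < e" using K e by (simp add: field_simps) (smt (verit) mult_nonneg_nonneg)
    finally show ?thesis .
  qed
  thus ?thesis using \<delta> by blast
qed


lemma mon_scale: "mon (t *\<^sub>R v) \<alpha> = t ^ deg \<alpha> * mon v \<alpha>"
  by (simp add: mon_def deg_def power_sum power_mult_distrib prod.distrib)

lemma finite_deg: "finite {\<alpha> :: 'n::finite \<Rightarrow> nat. deg \<alpha> = n}"
proof (rule finite_subset)
  show "{\<alpha> :: 'n \<Rightarrow> nat. deg \<alpha> = n} \<subseteq> PiE UNIV (\<lambda>_. {..n})"
    using le_deg by (auto simp: PiE_def Pi_def)
  show "finite (PiE (UNIV :: 'n set) (\<lambda>_. {..n}))" by (simp add: finite_PiE)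
qed

lemma vanish:
  fixes f :: "real^'n::finite \<Rightarrow> real"
  assumes L: "locPS f a \<rho> c" and e: "e > 0" and z: "\<forall>y\<in>ball a e. f y = 0" and x: "x \<in> pd a \<rho>"
  shows "f x = 0"
proof -
  from L have \<rho>: "0 < \<rho>"
    and hs: "\<And>x. x \<in> pd a \<rho> \<Longrightarrow> ((\<lambda>\<alpha>. c \<alpha> * mon (x - a) \<alpha>) has_sum f x) UNIV"
    unfolding locPS_def by auto
  define v where "v = x - a"
  define M where "M = Max (range (\<lambda>i. \<bar>v$i\<bar>))"
  have M: "\<bar>v$i\<bar> \<le> M" for i unfolding M_def by (intro Max_ge) auto
  have "M \<in> range (\<lambda>i. \<bar>v$i\<bar>)" unfolding M_def by (intro Max_in) auto
  hence M\<rho>: "M < \<rho>" "0 \<le> M" using x by (auto simp: pd_def v_def)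
  define R where "R = 2 * \<rho> / (\<rho> + M)"
  have R1: "1 < R" using M\<rho> \<rho> by (simp add: R_def field_simps)
  have RM: "R * M < \<rho>" using M\<rho> \<rho> by (simp add: R_def field_simps)
  define D where "D = (\<lambda>n. {\<alpha> :: 'n \<Rightarrow> nat. deg \<alpha> = n})"
  define P where "P = (\<lambda>n. \<Sum>\<alpha>\<in>D n. c \<alpha> * mon v \<alpha>)"
  define \<phi> where "\<phi> = (\<lambda>t. f (a + t *\<^sub>R v))"
  have sm: "(\<lambda>n. P n * t ^ n) sums \<phi> t" if t: "\<bar>t\<bar> < R" for t
  proof -
    have tM: "\<bar>t\<bar> * M < \<rho>"
    proof -
      have "\<bar>t\<bar> * M \<le> R * M" using t M\<rho> by (intro mult_right_mono) auto
      thus ?thesis using RM by linarith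
    qed
    have "a + t *\<^sub>R v \<in> pd a \<rho>" unfolding pd_def mem_Collect_eq
    proof
      fix i
      have "\<bar>t * v$i\<bar> \<le> \<bar>t\<bar> * M" unfolding abs_mult by (intro mult_left_mono M) auto
      thus "\<bar>(a + t *\<^sub>R v) $ i - a $ i\<bar> < \<rho>" using tM by simp
    qed
    from hs[OF this] have h1: "((\<lambda>\<alpha>. c \<alpha> * (t ^ deg \<alpha> * mon v \<alpha>)) has_sum \<phi> t) UNIV"
      by (simp add: \<phi>_def mon_scale)
    have h2: "((\<lambda>(n, \<alpha>). c \<alpha> * (t ^ n * mon v \<alpha>)) has_sum \<phi> t) (Sigma UNIV D)"
    proof -
      have "((\<lambda>\<alpha>. c \<alpha> * (t ^ deg \<alpha> * mon v \<alpha>)) has_sum \<phi> t) UNIV =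
            ((\<lambda>(n, \<alpha>). c \<alpha> * (t ^ n * mon v \<alpha>)) has_sum \<phi> t) (Sigma UNIV D)"
        by (rule has_sum_reindex_bij_witness[where i=snd and j="\<lambda>\<alpha>. (deg \<alpha>, \<alpha>)"])
           (auto simp: D_def)
      thus ?thesis using h1 by simp
    qed
    have h3: "((\<lambda>\<alpha>. (\<lambda>(n, \<alpha>). c \<alpha> * (t ^ n * mon v \<alpha>)) (n, \<alpha>)) has_sum t ^ n * P n) (D n)" for n
    proof -
      have "finite (D n)" unfolding D_def by (rule finite_deg)
      hence "((\<lambda>\<alpha>. c \<alpha> * (t ^ n * mon v \<alpha>)) has_sum (\<Sum>\<alpha>\<in>D n. c \<alpha> * (t ^ n * mon v \<alpha>))) (D n)"
        by (rule has_sum_finite)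
      moreover have "(\<Sum>\<alpha>\<in>D n. c \<alpha> * (t ^ n * mon v \<alpha>)) = t ^ n * P n"
        unfolding P_def by (simp add: sum_distrib_left ac_simps)
      ultimately show ?thesis by simp
    qed
    have "((\<lambda>n. t ^ n * P n) has_sum \<phi> t) UNIV"
      by (rule has_sum_SigmaD[OF h2 h3])
    hence "(\<lambda>n. t ^ n * P n) sums \<phi> t" by (rule has_sum_imp_sums)
    thus ?thesis by (simp add: ac_simps)
  qed
  have \<phi>0: "\<phi> 0 = 0" using z e by (simp add: \<phi>_def)
  have Pm: "P m = 0" if m: "m > 0" for m
  proof (rule ccontr)
    assume Pm: "P m \<noteq> 0"
    have sm': "\<And>t. norm (t - 0) < R \<Longrightarrow> (\<lambda>n. P n * (t - 0) ^ n) sums \<phi> t" using sm by simp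
    obtain s where s: "0 < s" and nz: "\<And>w. w \<in> cball 0 s - {0} \<Longrightarrow> \<phi> w \<noteq> 0"
      using powser_0_nonzero[of R, OF _ sm' \<phi>0 Pm m] R1 by auto
    define w where "w = min s (e / (2 * (norm v + 1)))"
    have nv: "0 < 2 * (norm v + 1)" by (smt (verit) norm_ge_zero)
    hence wpos: "0 < e / (2 * (norm v + 1))" using e by (intro divide_pos_pos) auto
    have w: "0 < w" "w \<le> s" "w \<le> e / (2 * (norm v + 1))"
      unfolding w_def using s wpos by auto
    have "w * norm v \<le> e / (2 * (norm v + 1)) * norm v"
      by (rule mult_right_mono[OF w(3) norm_ge_zero])
    also have "\<dots> < e / (2 * (norm v + 1)) * (2 * (norm v + 1))"
      by (rule mult_strict_left_mono[OF _ wpos]) (smt (verit) norm_ge_zero)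
    also have "\<dots> = e" using nv by simp
    finally have "norm (w *\<^sub>R v) < e" using w by simp
    hence "a + w *\<^sub>R v \<in> ball a e" by (simp add: dist_norm)
    hence "\<phi> w = 0" using z by (simp add: \<phi>_def)
    moreover have "w \<in> cball 0 s - {0}" using w by auto
    ultimately show False using nz by blast
  qed
  have P0: "P 0 = 0" using sm[of 0] R1 \<phi>0 by simp
  have "(\<lambda>n. P n * 1 ^ n) sums \<phi> 1" using sm[of 1] R1 by simp
  moreover have "(\<lambda>n. P n * 1 ^ n) = (\<lambda>n. 0)" using Pm P0 by (auto simp: fun_eq_iff) (metis gr0I)
  ultimately have "\<phi> 1 = 0" using sums_unique2 sums_zero by metis
  thus ?thesis by (simp add: \<phi>_def v_def)
qed


lemma identity:
  fixes f :: "real^'n::finite \<Rightarrow> real"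
  assumes U: "open U" "connected U" and A: "\<forall>a\<in>U. \<exists>\<rho> c. locPS f a \<rho> c"
    and x0: "x0 \<in> U" and e: "e > 0" and z: "\<forall>y\<in>ball x0 e. f y = 0"
  shows "\<forall>x\<in>U. f x = 0"
proof -
  define S where "S = {x\<in>U. \<exists>\<epsilon>>0. \<forall>y\<in>ball x \<epsilon>. f y = 0}"
  define T where "T = {x\<in>U. x \<notin> S}"
  have oS: "open S" unfolding open_contains_ball
  proof
    fix x assume "x \<in> S"
    then obtain \<epsilon> where \<epsilon>: "\<epsilon> > 0" "\<forall>y\<in>ball x \<epsilon>. f y = 0" and xU: "x \<in> U"
      by (auto simp: S_def)
    obtain \<epsilon>' where \<epsilon>': "\<epsilon>' > 0" "ball x \<epsilon>' \<subseteq> U" using U(1) xU open_contains_ball by blast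
    define r where "r = min \<epsilon> \<epsilon>'"
    have r: "0 < r" "r \<le> \<epsilon>" "r \<le> \<epsilon>'" using \<epsilon> \<epsilon>' by (auto simp: r_def)
    have "ball x r \<subseteq> S"
    proof
      fix y assume y: "y \<in> ball x r"
      have yU: "y \<in> U" using y r \<epsilon>' by auto
      have "ball y (r - dist x y) \<subseteq> ball x r"
      proof
        fix w assume "w \<in> ball y (r - dist x y)"
        hence "dist y w < r - dist x y" by simp
        moreover have "dist x w \<le> dist x y + dist y w" by (rule dist_triangle)
        ultimately show "w \<in> ball x r" by simp
      qed
      hence "\<forall>w\<in>ball y (r - dist x y). f w = 0" using \<epsilon> r by auto
      moreover have "r - dist x y > 0" using y by simp
      ultimately show "y \<in> S" using yU unfolding S_def by blast
    qed
    thus "\<exists>r>0. ball x r \<subseteq> S" using r by blast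
  qed
  have oT: "open T" unfolding open_contains_ball
  proof
    fix x assume "x \<in> T"
    hence xU: "x \<in> U" and xS: "x \<notin> S" by (auto simp: T_def)
    obtain \<rho> c where L: "locPS f x \<rho> c" using A xU by blast
    have \<rho>: "0 < \<rho>" using L by (simp add: locPS_def)
    obtain \<epsilon>1 where \<epsilon>1: "\<epsilon>1 > 0" "ball x \<epsilon>1 \<subseteq> U" using U(1) xU open_contains_ball by blast
    define r where "r = min \<epsilon>1 (\<rho>/2)"
    have r: "0 < r" "r \<le> \<epsilon>1" "r \<le> \<rho>/2" using \<epsilon>1 \<rho> by (auto simp: r_def)
    have "ball x r \<subseteq> T"
    proof
      fix y assume y: "y \<in> ball x r"
      have yU: "y \<in> U" using y r \<epsilon>1 by auto
      have yx: "\<bar>y$i - x$i\<bar> < \<rho>/2" for i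
      proof -
        have "\<bar>(y - x)$i\<bar> \<le> norm (y - x)" by (rule component_le_norm_cart)
        also have "\<dots> < r" using y by (simp add: dist_norm norm_minus_commute)
        finally show ?thesis using r by simp
      qed
      have "y \<notin> S"
      proof
        assume "y \<in> S"
        then obtain \<epsilon>2 where \<epsilon>2: "\<epsilon>2 > 0" "\<forall>w\<in>ball y \<epsilon>2. f w = 0" by (auto simp: S_def)
        have b: "\<bar>y$i - x$i\<bar> + \<rho>/2 \<le> \<rho>" for i using yx[of i] by linarith
        have \<rho>2: "0 < \<rho>/2" using \<rho> by simp
        note R = recenter[OF L \<rho>2 b]
        have van: "\<forall>w\<in>pd y (\<rho>/2). f w = 0"
          using vanish[OF R(1) \<epsilon>2(1) \<epsilon>2(2)] by blast
        have "x \<in> pd y (\<rho>/2)" using yx by (simp add: pd_def abs_minus_commute)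
        then obtain \<epsilon>3 where "\<epsilon>3 > 0" "ball x \<epsilon>3 \<subseteq> pd y (\<rho>/2)"
          using open_pd open_contains_ball by blast
        hence "x \<in> S" using van xU unfolding S_def by blast
        with xS show False by simp
      qed
      thus "y \<in> T" using yU by (simp add: T_def)
    qed
    thus "\<exists>r>0. ball x r \<subseteq> T" using r by blast
  qed
  have "S \<inter> T \<inter> U = {}" "U \<subseteq> S \<union> T" by (auto simp: S_def T_def)
  from connectedD[OF U(2) oS oT this] have "S \<inter> U = {} \<or> T \<inter> U = {}" .
  moreover have "x0 \<in> S" using x0 e z by (auto simp: S_def)
  ultimately have "T \<inter> U = {}" using x0 by blast
  hence "\<forall>x\<in>U. x \<in> S" by (auto simp: T_def)
  thus ?thesis unfolding S_def by auto
qed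

lemma prod_zero:
  fixes P Q :: "real^'n::finite \<Rightarrow> real"
  assumes U: "open U" "connected U" and AP: "\<forall>a\<in>U. \<exists>\<rho> c. locPS P a \<rho> c"
    and AQ: "\<forall>a\<in>U. \<exists>\<rho> c. locPS Q a \<rho> c" and Z: "\<forall>x\<in>U. P x * Q x = 0"
  shows "(\<forall>x\<in>U. P x = 0) \<or> (\<forall>x\<in>U. Q x = 0)"
proof (cases "\<forall>x\<in>U. P x = 0")
  case True thus ?thesis by blast
next
  case False
  then obtain x0 where x0: "x0 \<in> U" "P x0 \<noteq> 0" by auto
  obtain \<rho> c where L: "locPS P x0 \<rho> c" using AP x0 by blast
  have "\<bar>P x0\<bar> > 0" using x0 by simp
  from cont_center[OF L this] obtain \<delta> where \<delta>: "\<delta> > 0" "\<forall>x\<in>ball x0 \<delta>. \<bar>P x - P x0\<bar> < \<bar>P x0\<bar>"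
    by blast
  obtain \<epsilon>1 where \<epsilon>1: "\<epsilon>1 > 0" "ball x0 \<epsilon>1 \<subseteq> U" using U(1) x0 open_contains_ball by blast
  define r where "r = min \<delta> \<epsilon>1"
  have r: "0 < r" using \<delta> \<epsilon>1 by (simp add: r_def)
  have "\<forall>y\<in>ball x0 r. Q y = 0"
  proof
    fix y assume y: "y \<in> ball x0 r"
    hence "y \<in> U" "y \<in> ball x0 \<delta>" using \<epsilon>1 by (auto simp: r_def)
    hence "P y \<noteq> 0" "y \<in> U" using \<delta> by force+
    thus "Q y = 0" using Z by auto
  qed
  from identity[OF U AQ x0(1) r this] show ?thesis by blast
qed


theorem lemma2p1:
  fixes g :: "'n::finite \<Rightarrow> real^'n \<Rightarrow> real" and U :: "(real^'n) set"
  assumes "open U" and "connected U"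
    and "\<And>i. real_analytic_on (g i) U"
    and "\<And>i j k x. x \<in> U \<Longrightarrow> i \<noteq> j \<Longrightarrow> j \<noteq> k \<Longrightarrow> i \<noteq> k \<Longrightarrow>
           partial (g i) j x * partial (g k) i x + partial (g k) j x * partial (g j) i x
           - partial (g k) j x * partial (g k) i x = 0"
  shows "(\<forall>i j k. dep_rel g U i j \<and> dep_rel g U j k \<longrightarrow> dep_rel g U i k)
     \<and> (\<forall>k i j. dep_rel g U i k \<and> dep_rel g U j k \<longrightarrow> dep_rel g U i j \<or> dep_rel g U j i)"
proof -
  have AP: "\<forall>a\<in>U. \<exists>\<rho> c. locPS (partial (g i) j) a \<rho> c" for i j
  proof
    fix a assume "a \<in> U"
    from locPS_of_analytic[OF assms(3) assms(1) this] obtain \<rho> c where "locPS (g i) a \<rho> c" by blast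
    from Lpartial[OF this, of j] show "\<exists>\<rho> c. locPS (partial (g i) j) a \<rho> c" by blast
  qed
  have key: "(\<forall>x\<in>U. partial (g a) b x = 0) \<or> (\<forall>x\<in>U. partial (g c) d x = 0)"
    if "\<forall>x\<in>U. partial (g a) b x * partial (g c) d x = 0" for a b c d
    by (rule prod_zero[OF assms(1,2) AP AP that])
  show ?thesis
  proof (intro conjI allI impI)
    fix i j k assume "dep_rel g U i j \<and> dep_rel g U j k"
    hence ij: "i = j \<or> (\<exists>x\<in>U. partial (g j) i x \<noteq> 0)"
      and jk: "j = k \<or> (\<exists>x\<in>U. partial (g k) j x \<noteq> 0)" by (auto simp: dep_rel_def)
    show "dep_rel g U i k"
    proof (cases "i = j \<or> j = k \<or> i = k")
      case True thus ?thesis using ij jk by (auto simp: dep_rel_def)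
    next
      case False
      hence d: "i \<noteq> j" "j \<noteq> k" "i \<noteq> k" by auto
      with ij jk have nz1: "\<exists>x\<in>U. partial (g j) i x \<noteq> 0" and nz2: "\<exists>x\<in>U. partial (g k) j x \<noteq> 0"
        by auto
      show ?thesis unfolding dep_rel_def
      proof (rule ccontr)
        assume "\<not> (i = k \<or> (\<exists>x\<in>U. partial (g k) i x \<noteq> 0))"
        hence z: "\<forall>x\<in>U. partial (g k) i x = 0" by auto
        have "\<forall>x\<in>U. partial (g k) j x * partial (g j) i x = 0"
        proof
          fix x assume x: "x \<in> U"
          from assms(4)[OF x d(1) d(2) d(3)] z x show "partial (g k) j x * partial (g j) i x = 0"
            by simp
        qed
        from key[OF this] nz1 nz2 show False by auto
      qed
    qed
  next
    fix k i j assume "dep_rel g U i k \<and> dep_rel g U j k"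
    hence ik: "i = k \<or> (\<exists>x\<in>U. partial (g k) i x \<noteq> 0)"
      and jk: "j = k \<or> (\<exists>x\<in>U. partial (g k) j x \<noteq> 0)" by (auto simp: dep_rel_def)
    show "dep_rel g U i j \<or> dep_rel g U j i"
    proof (cases "i = j \<or> j = k \<or> i = k")
      case True thus ?thesis using ik jk by (auto simp: dep_rel_def)
    next
      case False
      hence d: "i \<noteq> j" "j \<noteq> k" "i \<noteq> k" by auto
      with ik jk have nz1: "\<exists>x\<in>U. partial (g k) i x \<noteq> 0" and nz2: "\<exists>x\<in>U. partial (g k) j x \<noteq> 0"
        by auto
      show ?thesis unfolding dep_rel_def
      proof (rule ccontr)
        assume "\<not> ((i = j \<or> (\<exists>x\<in>U. partial (g j) i x \<noteq> 0)) \<or> (j = i \<or> (\<exists>x\<in>U. partial (g i) j x \<noteq> 0)))"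
        hence z1: "\<forall>x\<in>U. partial (g j) i x = 0" and z2: "\<forall>x\<in>U. partial (g i) j x = 0" by auto
        have "\<forall>x\<in>U. partial (g k) j x * partial (g k) i x = 0"
        proof
          fix x assume x: "x \<in> U"
          from assms(4)[OF x d(1) d(2) d(3)] z1 z2 x show "partial (g k) j x * partial (g k) i x = 0"
            by simp
        qed
        from key[OF this] nz1 nz2 show False by auto
      qed
    qed
  qed
qed

end
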